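(* Let $M$ be a nonempty closed, real algebraic, irreducible subset of $V$ which is $A$-invariant. Then there exists $v\in M$ such that $\mu_{\mathfrak a}(M)=C_I$ with $I=\mathrm{supp}_v$; in particular $\mu_{\mathfrak a}(M)$ is a polyhedral.
   Context: Let $V$ be a finite-dimensional real vector space with a scalar product $\langle\cdot,\cdot\rangle$. Let $G\subset\mathrm{GL}(V)$ be a connected closed subgroup, closed under transpose, with Lie algebra $\mathfrak g$, $G=K\exp(\mathfrak p)$ with $K=G\cap\mathrm O(V)$, $\mathfrak p=\mathfrak g\cap\mathrm{Sym}(V)$. Let $\mathfrak a\subset\mathfrak p$ be an Abelian subalgebra, $A=\exp(\mathfrak a)$, and $\mu_{\mathfrak a}:V\to\mathfrak a^*$, $\mu_{\mathfrak a}(x)(\xi)=\langle\xi x,x\rangle$. Fix an orthonormal basis $v_1,\dots,v_n$ of $V$ simultaneously diagonalizing $\mathfrak a$, with $\xi v_i=\alpha_i(\xi)v_i$, $\alpha_i\in\mathfrak a^*$. For $v=\sum x_iv_i$, $\mathrm{supp}_v=\{i:x_i\neq0\}$; for $I\subset\{1,\dots,n\}$, $C_I=\{\sum_{i\in I}s_i\alpha_i:s_i\ge0\}$. Irreducibility is with respect to the Zariski topology. A polyhedral is an intersection of finitely many closed linear half-spaces. *)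

theory Defs
  imports "HOL-Analysis.Analysis"
begin

text \<open>V is modelled as real^'n with the standard scalar product; endomorphisms of V
 as matrices real^'n^'n.\<close>

primrec matpow :: "real^'n^'n \<Rightarrow> nat \<Rightarrow> real^'n^'n" where
  "matpow X 0 = mat 1"
| "matpow X (Suc k) = X ** matpow X k"

definition mexp :: "real^'n^'n \<Rightarrow> real^'n^'n" where
  "mexp X = (\<Sum>k. (1 / fact k) *\<^sub>R matpow X k)"

inductive_set poly_fun :: "(real^'n \<Rightarrow> real) set" where
  const: "(\<lambda>x. c) \<in> poly_fun"
| coord: "(\<lambda>x. x $ i) \<in> poly_fun"
| add: "p \<in> poly_fun \<Longrightarrow> q \<in> poly_fun \<Longrightarrow> (\<lambda>x. p x + q x) \<in> poly_fun"
| mult: "p \<in> poly_fun \<Longrightarrow> q \<in> poly_fun \<Longrightarrow> (\<lambda>x. p x * q x) \<in> poly_fun"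

text \<open>Zariski closed (= real algebraic) subsets: common zero sets of polynomials.\<close>
definition zariski_closed :: "(real^'n) set \<Rightarrow> bool" where
  "zariski_closed Z \<longleftrightarrow> (\<exists>P \<subseteq> poly_fun. Z = {x. \<forall>p\<in>P. p x = 0})"

definition zariski_irreducible :: "(real^'n) set \<Rightarrow> bool" where
  "zariski_irreducible M \<longleftrightarrow> M \<noteq> {} \<and>
     (\<forall>Z1 Z2. zariski_closed Z1 \<longrightarrow> zariski_closed Z2 \<longrightarrow> M \<subseteq> Z1 \<union> Z2 \<longrightarrow>
        M \<subseteq> Z1 \<or> M \<subseteq> Z2)"

text \<open>Moment map, as an element of the dual of the subspace a (functional restricted to a).\<close>
definition moment_map :: "(real^'n^'n) set \<Rightarrow> real^'n \<Rightarrow> (real^'n^'n \<Rightarrow> real)" where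
  "moment_map \<aa> x = restrict (\<lambda>\<xi>. inner (\<xi> *v x) x) \<aa>"

definition supp :: "('n \<Rightarrow> real^'n) \<Rightarrow> real^'n \<Rightarrow> 'n set" where
  "supp b v = {i. inner v (b i) \<noteq> 0}"

definition cone :: "(real^'n^'n) set \<Rightarrow> ('n \<Rightarrow> real^'n^'n \<Rightarrow> real) \<Rightarrow> 'n set
     \<Rightarrow> (real^'n^'n \<Rightarrow> real) set" where
  "cone \<aa> \<alpha> I = {restrict (\<lambda>\<xi>. \<Sum>i\<in>I. s i * \<alpha> i \<xi>) \<aa> | s. \<forall>i\<in>I. s i \<ge> 0}"

end

theory Submission
  imports Defs
begin

lemma onb_expand:
  fixes b :: "'n::finite \<Rightarrow> real^'n"
  assumes ob: "\<forall>i j. inner (b i) (b j) = (if i = j then 1 else 0)"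
  shows "x = (\<Sum>i\<in>UNIV. inner x (b i) *\<^sub>R b i)"
proof -
  define B :: "real^'n^'n" where "B = (\<chi> i. b i)"
  have "B ** transpose B = mat 1"
    using ob by (simp add: B_def matrix_matrix_mult_def transpose_def mat_def inner_vec_def vec_eq_iff)
  then have T: "transpose B ** B = mat 1" using matrix_left_right_inverse by blast
  have "x = (transpose B ** B) *v x" by (simp add: T)
  also have "\<dots> = transpose B *v (B *v x)" by (simp add: matrix_vector_mul_assoc)
  also have "B *v x = (\<chi> i. inner x (b i))"
    by (simp add: B_def matrix_vector_mult_def inner_vec_def vec_eq_iff mult.commute)
  also have "transpose B *v (\<chi> i. inner x (b i)) = (\<Sum>i\<in>UNIV. inner x (b i) *\<^sub>R b i)"
    by (simp add: matrix_mult_sum B_def row_def scalar_mult_eq_scaleR)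
  finally show ?thesis .
qed

definition proj :: "real^'n \<Rightarrow> real^'n^'n" where
  "proj u = (\<chi> r c. u$r * u$c)"

lemma proj_mult: "proj u *v x = inner u x *\<^sub>R u"
  by (simp add: proj_def matrix_vector_mult_def inner_vec_def vec_eq_iff sum_distrib_left mult_ac)

lemma linear_expand:
  fixes b :: "'n::finite \<Rightarrow> real^'n"
  assumes ob: "\<forall>i j. inner (b i) (b j) = (if i = j then 1 else 0)"
  shows "A *v x = (\<Sum>i\<in>UNIV. inner x (b i) *\<^sub>R (A *v b i))"
proof -
  have "A *v x = A *v (\<Sum>i\<in>UNIV. inner x (b i) *\<^sub>R b i)" using onb_expand[OF ob] by metis
  also have "\<dots> = (\<Sum>i\<in>UNIV. inner x (b i) *\<^sub>R (A *v b i))"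
    by (simp add: linear_sum[OF matrix_vector_mul_linear[of A]] matrix_vector_mult_scaleR)
  finally show ?thesis .
qed

lemma mat_eq_onb:
  fixes b :: "'n::finite \<Rightarrow> real^'n"
  assumes ob: "\<forall>i j. inner (b i) (b j) = (if i = j then 1 else 0)"
    and "\<And>i. A *v b i = B *v b i"
  shows "A = B"
  unfolding matrix_eq
proof
  fix x
  show "A *v x = B *v x"
    using linear_expand[OF ob, of A x] linear_expand[OF ob, of B x] assms(2) by simp
qed

lemma matpow_eig:
  assumes "X *v u = c *\<^sub>R u"
  shows "matpow X k *v u = (c^k) *\<^sub>R u"
  by (induction k) (auto simp: matrix_vector_mul_assoc[symmetric] matrix_vector_mult_scaleR assms)

lemma sum_mvmult: "(\<Sum>i\<in>S. A i) *v x = (\<Sum>i\<in>S. A i *v x)"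
  by (induction S rule: infinite_finite_induct) (auto simp: matrix_vector_mult_add_rdistrib)

lemma sum_proj_mult:
  fixes b :: "'n::finite \<Rightarrow> real^'n"
  assumes ob: "\<forall>i j. inner (b i) (b j) = (if i = j then 1 else 0)"
  shows "(\<Sum>i\<in>UNIV. f i *\<^sub>R proj (b i)) *v b j = f j *\<^sub>R b j"
proof -
  have "(\<Sum>i\<in>UNIV. f i *\<^sub>R proj (b i)) *v b j = (\<Sum>i\<in>UNIV. f i *\<^sub>R (proj (b i) *v b j))"
    by (simp add: sum_mvmult scaleR_matrix_vector_assoc)
  also have "\<dots> = (\<Sum>i\<in>UNIV. if i = j then f j *\<^sub>R b j else 0)"
    by (rule sum.cong) (auto simp: proj_mult ob)
  also have "\<dots> = f j *\<^sub>R b j" by simp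
  finally show ?thesis .
qed

lemma matpow_onb:
  fixes b :: "'n::finite \<Rightarrow> real^'n"
  assumes ob: "\<forall>i j. inner (b i) (b j) = (if i = j then 1 else 0)"
    and eig: "\<And>i. X *v b i = c i *\<^sub>R b i"
  shows "matpow X k = (\<Sum>i\<in>UNIV. (c i ^ k) *\<^sub>R proj (b i))"
  by (rule mat_eq_onb[OF ob]) (simp add: sum_proj_mult[OF ob] matpow_eig[OF eig])

lemma mexp_onb:
  fixes b :: "'n::finite \<Rightarrow> real^'n"
  assumes ob: "\<forall>i j. inner (b i) (b j) = (if i = j then 1 else 0)"
    and eig: "\<And>i. X *v b i = c i *\<^sub>R b i"
  shows "mexp X = (\<Sum>i\<in>UNIV. exp (c i) *\<^sub>R proj (b i))"
proof -
  have "(\<lambda>k. (1 / fact k) *\<^sub>R matpow X k) = (\<lambda>k. \<Sum>i\<in>UNIV. (c i ^ k /\<^sub>R fact k) *\<^sub>R proj (b i))"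
    by (simp add: matpow_onb[OF ob eig] scaleR_sum_right divide_inverse_commute)
  moreover have "(\<lambda>k. \<Sum>i\<in>UNIV. (c i ^ k /\<^sub>R fact k) *\<^sub>R proj (b i)) sums (\<Sum>i\<in>UNIV. exp (c i) *\<^sub>R proj (b i))"
    by (intro sums_sum sums_scaleR_left exp_converges)
  ultimately show ?thesis unfolding mexp_def by (simp add: sums_iff)
qed

lemma coord_sum:
  fixes b :: "'n::finite \<Rightarrow> real^'n"
  assumes ob: "\<forall>i j. inner (b i) (b j) = (if i = j then 1 else 0)"
  shows "inner (\<Sum>i\<in>UNIV. d i *\<^sub>R b i) (b j) = d j"
proof -
  have "inner (\<Sum>i\<in>UNIV. d i *\<^sub>R b i) (b j) = (\<Sum>i\<in>UNIV. d i * inner (b i) (b j))"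
    by (simp add: inner_sum_left)
  also have "\<dots> = (\<Sum>i\<in>UNIV. if i = j then d j else 0)"
    by (rule sum.cong) (auto simp: ob)
  finally show ?thesis by simp
qed

lemma moment_expand:
  fixes b :: "'n::finite \<Rightarrow> real^'n"
  assumes ob: "\<forall>i j. inner (b i) (b j) = (if i = j then 1 else 0)"
    and eig: "\<And>i. X *v b i = c i *\<^sub>R b i"
  shows "inner (X *v x) x = (\<Sum>i\<in>UNIV. c i * (inner x (b i))^2)"
proof -
  have "inner (X *v x) x = inner (\<Sum>i\<in>UNIV. inner x (b i) *\<^sub>R (c i *\<^sub>R b i)) x"
    using linear_expand[OF ob, of X x] eig by simp
  also have "\<dots> = (\<Sum>i\<in>UNIV. c i * (inner x (b i))^2)"
    by (simp add: inner_sum_left inner_sum_right power2_eq_square inner_commute mult_ac)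
  finally show ?thesis .
qed

lemma mexp_coord:
  fixes b :: "'n::finite \<Rightarrow> real^'n"
  assumes ob: "\<forall>i j. inner (b i) (b j) = (if i = j then 1 else 0)"
    and eig: "\<And>i. X *v b i = c i *\<^sub>R b i"
  shows "inner (mexp X *v v) (b j) = exp (c j) * inner v (b j)"
proof -
  have "mexp X *v v = (\<Sum>i\<in>UNIV. (exp (c i) * inner v (b i)) *\<^sub>R b i)"
    by (simp add: mexp_onb[OF ob eig] sum_mvmult scaleR_matrix_vector_assoc[symmetric] proj_mult inner_commute)
  then show ?thesis by (simp add: coord_sum[OF ob])
qed

lemma poly_fun_sum:
  "finite S \<Longrightarrow> (\<And>j. j \<in> S \<Longrightarrow> f j \<in> poly_fun) \<Longrightarrow> (\<lambda>x. \<Sum>j\<in>S. f j x) \<in> poly_fun"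
proof (induction S rule: finite_induct)
  case empty
  then show ?case using poly_fun.const[of 0] by simp
next
  case (insert a F)
  then show ?case using poly_fun.add[of "f a" "\<lambda>x. \<Sum>j\<in>F. f j x"] by simp
qed

lemma poly_fun_inner: "(\<lambda>x::real^'n. inner x u) \<in> poly_fun"
proof -
  have "(\<lambda>x::real^'n. \<Sum>j\<in>UNIV. x $ j * u $ j) \<in> poly_fun"
    by (rule poly_fun_sum) (auto intro: poly_fun.mult poly_fun.coord poly_fun.const)
  then show ?thesis by (simp add: inner_vec_def)
qed

lemma poly_fun_cont: "p \<in> poly_fun \<Longrightarrow> continuous_on UNIV p"
  by (induction rule: poly_fun.induct) (auto intro!: continuous_intros)

lemma zariski_closed_closed: "zariski_closed Z \<Longrightarrow> closed Z"
proof -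
  assume "zariski_closed Z"
  then obtain P where P: "P \<subseteq> poly_fun" "Z = {x. \<forall>p\<in>P. p x = 0}" unfolding zariski_closed_def by blast
  have "Z = (\<Inter>p\<in>P. {x. p x = 0})" using P by auto
  moreover have "closed {x. p x = 0}" if "p \<in> P" for p
    using P that by (intro closed_Collect_eq poly_fun_cont continuous_intros) auto
  ultimately show "closed Z" by auto
qed

lemma zariski_closed_empty: "zariski_closed {}"
  unfolding zariski_closed_def
  by (rule exI[of _ "{\<lambda>x. 1}"]) (auto intro: poly_fun.const)

lemma zariski_closed_Un:
  assumes "zariski_closed Z1" "zariski_closed Z2"
  shows "zariski_closed (Z1 \<union> Z2)"
proof -
  obtain P where P: "P \<subseteq> poly_fun" "Z1 = {x. \<forall>p\<in>P. p x = 0}" using assms(1) unfolding zariski_closed_def by blast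
  obtain Q where Q: "Q \<subseteq> poly_fun" "Z2 = {x. \<forall>p\<in>Q. p x = 0}" using assms(2) unfolding zariski_closed_def by blast
  define R where "R = {(\<lambda>x. p x * q x) | p q. p \<in> P \<and> q \<in> Q}"
  have "R \<subseteq> poly_fun" using P Q by (auto simp: R_def intro: poly_fun.mult)
  moreover have "Z1 \<union> Z2 = {x. \<forall>r\<in>R. r x = 0}"
  proof
    show "Z1 \<union> Z2 \<subseteq> {x. \<forall>r\<in>R. r x = 0}" using P Q by (auto simp: R_def)
    show "{x. \<forall>r\<in>R. r x = 0} \<subseteq> Z1 \<union> Z2"
    proof
      fix x assume x: "x \<in> {x. \<forall>r\<in>R. r x = 0}"
      show "x \<in> Z1 \<union> Z2"
      proof (cases "x \<in> Z1")
        case False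
        then obtain p where p: "p \<in> P" "p x \<noteq> 0" using P by auto
        have "\<forall>q\<in>Q. q x = 0"
        proof
          fix q assume "q \<in> Q"
          then have "(\<lambda>x. p x * q x) \<in> R" unfolding R_def using p by blast
          then have "p x * q x = 0" using x by (metis (mono_tags, lifting) mem_Collect_eq)
          then show "q x = 0" using p by simp
        qed
        then show ?thesis using Q by auto
      qed simp
    qed
  qed
  ultimately show ?thesis unfolding zariski_closed_def by blast
qed

lemma irred_avoid:
  assumes irr: "zariski_irreducible M" and fin: "finite J"
    and Z: "\<And>i. i \<in> J \<Longrightarrow> zariski_closed (Z i) \<and> \<not> M \<subseteq> Z i"
  shows "\<exists>x\<in>M. \<forall>i\<in>J. x \<notin> Z i"
proof -
  have "zariski_closed (\<Union>i\<in>J. Z i) \<and> \<not> M \<subseteq> (\<Union>i\<in>J. Z i)"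
    using fin Z
  proof (induction J rule: finite_induct)
    case empty
    then show ?case using irr zariski_closed_empty by (auto simp: zariski_irreducible_def)
  next
    case (insert j F)
    then have IH: "zariski_closed (\<Union>i\<in>F. Z i)" "\<not> M \<subseteq> (\<Union>i\<in>F. Z i)" by auto
    have Zj: "zariski_closed (Z j)" "\<not> M \<subseteq> Z j" using insert.prems by auto
    have "\<not> M \<subseteq> Z j \<union> (\<Union>i\<in>F. Z i)"
      using irr IH Zj unfolding zariski_irreducible_def by blast
    then show ?case using zariski_closed_Un[OF Zj(1) IH(1)] by simp
  qed
  then show ?thesis by blast
qed

lemma exp_lb:
  assumes "(C::real) > 0" "S \<ge> 0"
  shows "\<exists>m. \<forall>z::real. C * exp z - S * z \<ge> m"
proof (cases "S = 0")
  case True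
  then show ?thesis using assms by (intro exI[of _ 0]) auto
next
  case False
  then have S: "S > 0" using assms by auto
  show ?thesis
  proof (intro exI allI)
    fix z :: real
    have "C * exp z = S * exp (z + ln (C / S))"
      using S assms by (simp add: exp_add)
    also have "\<dots> \<ge> S * (1 + (z + ln (C / S)))"
      using S by (intro mult_left_mono exp_ge_add_one_self) auto
    finally show "C * exp z - S * z \<ge> S * (1 + ln (C / S))" by (simp add: algebra_simps)
  qed
qed

lemma exp_lb2:
  assumes "(C::real) > 0" "s \<ge> 0"
  shows "\<exists>m. \<forall>y::real. C * exp (2*y) - s * y \<ge> C / 2 * exp (2*y) + m"
proof -
  obtain m where m: "\<forall>z::real. C/2 * exp z - s/2 * z \<ge> m" using exp_lb[of "C/2" "s/2"] assms by auto
  show ?thesis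
  proof (intro exI allI)
    fix y :: real
    show "C * exp (2*y) - s * y \<ge> C / 2 * exp (2*y) + m" using m[rule_format, of "2*y"] by simp
  qed
qed

lemma ekeland_step:
  fixes f :: "'a::euclidean_space \<Rightarrow> real"
  assumes S: "subspace S" and cont: "continuous_on UNIV f" and lb: "\<And>x. f x \<ge> m"
    and eps: "\<epsilon> > 0"
    and deriv: "\<And>x \<eta>. x \<in> S \<Longrightarrow> \<eta> \<in> S \<Longrightarrow> ((\<lambda>t. f (x + t *\<^sub>R \<eta>)) has_real_derivative D x \<eta>) (at 0)"
    and Dneg: "\<And>x \<eta>. D x (-\<eta>) = - D x \<eta>"
  shows "\<exists>x\<in>S. f x \<le> f 0 \<and> (\<forall>\<eta>\<in>S. \<bar>D x \<eta>\<bar> \<le> \<epsilon> * norm \<eta>)"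
proof -
  define R where "R = (f 0 - m) / \<epsilon>"
  have R0: "R \<ge> 0" using lb[of 0] eps by (simp add: R_def)
  define T where "T = cball 0 R \<inter> S"
  have cT: "compact T" unfolding T_def by (rule compact_Int_closed[OF compact_cball closed_subspace[OF S]])
  have T0: "0 \<in> T" using R0 subspace_0[OF S] by (simp add: T_def)
  define F where "F x = f x + \<epsilon> * norm x" for x
  have cf: "continuous_on T f" using continuous_on_subset[OF cont] by blast
  have cF: "continuous_on T F" unfolding F_def
    by (intro continuous_intros cf)
  obtain x0 where x0: "x0 \<in> T" "\<And>y. y \<in> T \<Longrightarrow> F x0 \<le> F y"
    using continuous_attains_inf[OF cT _ cF] T0 by blast
  have glob: "F x0 \<le> F y" if "y \<in> S" for y
  proof (cases "norm y \<le> R")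
    case True
    then show ?thesis using x0 that by (simp add: T_def)
  next
    case False
    have "F x0 \<le> F 0" using x0 T0 by blast
    also have "\<dots> = f 0" by (simp add: F_def)
    also have "\<dots> = m + \<epsilon> * R" using eps by (simp add: R_def)
    finally have 1: "F x0 \<le> m + \<epsilon> * R" .
    have "\<epsilon> * R \<le> \<epsilon> * norm y" using False eps by (intro mult_left_mono) auto
    then have "m + \<epsilon> * R \<le> F y" using lb[of y] by (simp add: F_def)
    then show ?thesis using 1 by linarith
  qed
  have x0S: "x0 \<in> S" using x0 by (simp add: T_def)
  have fx0: "f x0 \<le> f 0"
  proof -
    have "f x0 \<le> F x0" using eps by (simp add: F_def)
    also have "\<dots> \<le> F 0" using glob subspace_0[OF S] by blast
    finally show ?thesis by (simp add: F_def)
  qed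
  have half: "D x0 \<eta> \<ge> - (\<epsilon> * norm \<eta>)" if \<eta>: "\<eta> \<in> S" for \<eta>
  proof (rule ccontr)
    assume "\<not> ?thesis"
    then have neg: "D x0 \<eta> + \<epsilon> * norm \<eta> < 0" by simp
    define h where "h t = f (x0 + t *\<^sub>R \<eta>) + \<epsilon> * norm \<eta> * t" for t
    have "(h has_real_derivative (D x0 \<eta> + \<epsilon> * norm \<eta> * 1)) (at 0)"
      unfolding h_def by (intro DERIV_add deriv[OF x0S \<eta>] DERIV_cmult DERIV_ident)
    moreover have "D x0 \<eta> + \<epsilon> * norm \<eta> * 1 < 0" using neg by simp
    ultimately have "\<exists>d > 0. \<forall>t > 0. t < d \<longrightarrow> h 0 > h (0 + t)"
      by (rule DERIV_neg_dec_right)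
    then obtain d where d: "d > 0" "\<And>t. t > 0 \<Longrightarrow> t < d \<Longrightarrow> h 0 > h (0 + t)"
      by blast
    define t where "t = d / 2"
    have t: "t > 0" "t < d" using d by (auto simp: t_def)
    have "h t < h 0" using d(2)[OF t] by simp
    then have A: "f (x0 + t *\<^sub>R \<eta>) + \<epsilon> * norm \<eta> * t < f x0" by (simp add: h_def)
    have "x0 + t *\<^sub>R \<eta> \<in> S" using S x0S \<eta> by (simp add: subspace_add subspace_scale)
    then have "F x0 \<le> F (x0 + t *\<^sub>R \<eta>)" using glob by blast
    also have "\<dots> \<le> f (x0 + t *\<^sub>R \<eta>) + \<epsilon> * (norm x0 + t * norm \<eta>)"
      unfolding F_def using eps t norm_triangle_ineq[of x0 "t *\<^sub>R \<eta>"]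
      by (intro add_left_mono mult_left_mono) auto
    finally show False using A by (simp add: F_def algebra_simps)
  qed
  show ?thesis
  proof (intro bexI conjI ballI)
    fix \<eta> assume \<eta>: "\<eta> \<in> S"
    have "- \<eta> \<in> S" using S \<eta> by (simp add: subspace_neg)
    then have "D x0 (-\<eta>) \<ge> - (\<epsilon> * norm \<eta>)" using half by fastforce
    then show "\<bar>D x0 \<eta>\<bar> \<le> \<epsilon> * norm \<eta>" using half[OF \<eta>] by (simp add: Dneg)
  qed (use fx0 x0S in auto)
qed

theorem mainTheorem7:
  fixes \<aa> :: "(real^'n^'n) set"
    and b :: "'n \<Rightarrow> real^'n"
    and \<alpha> :: "'n \<Rightarrow> real^'n^'n \<Rightarrow> real"
    and M :: "(real^'n) set"
  assumes a_subspace: "subspace \<aa>"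
    and a_sym: "\<forall>\<xi>\<in>\<aa>. transpose \<xi> = \<xi>"
    and a_abelian: "\<forall>\<xi>\<in>\<aa>. \<forall>\<eta>\<in>\<aa>. \<xi> ** \<eta> = \<eta> ** \<xi>"
    and b_orthonormal: "\<forall>i j. inner (b i) (b j) = (if i = j then 1 else 0)"
    and b_diag: "\<forall>i. \<forall>\<xi>\<in>\<aa>. \<xi> *v b i = \<alpha> i \<xi> *\<^sub>R b i"
    and M_nonempty: "M \<noteq> {}"
    and M_closed: "zariski_closed M"
    and M_irred: "zariski_irreducible M"
    and M_invariant: "\<forall>\<xi>\<in>\<aa>. \<forall>x\<in>M. mexp \<xi> *v x \<in> M"
  shows "\<exists>v\<in>M. moment_map \<aa> ` M = cone \<aa> \<alpha> (supp b v)"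
proof -
  note ob = b_orthonormal
  define a where "a i \<xi> = inner (\<xi> *v b i) (b i)" for i and \<xi> :: "real^'n^'n"
  have a\<alpha>: "a i \<xi> = \<alpha> i \<xi>" if "\<xi> \<in> \<aa>" for i \<xi>
    using that b_diag ob by (simp add: a_def)
  have eig: "\<xi> *v b i = a i \<xi> *\<^sub>R b i" if "\<xi> \<in> \<aa>" for i \<xi>
    using that b_diag a\<alpha> by simp
  have a_lin: "a i (\<xi> + t *\<^sub>R \<eta>) = a i \<xi> + t * a i \<eta>" for i \<xi> \<eta> t
    by (simp add: a_def matrix_vector_mult_add_rdistrib scaleR_matrix_vector_assoc[symmetric] inner_add_left)
  have a_neg: "a i (-\<eta>) = - a i \<eta>" for i \<eta>
    using a_lin[of i 0 "-1" \<eta>] by (simp add: a_def)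
  have lin_a: "linear (a i)" for i
    by (rule linearI) (simp_all add: a_def matrix_vector_mult_add_rdistrib scaleR_matrix_vector_assoc[symmetric] inner_add_left)
  have a_cont: "continuous_on S (a i)" for S i
    using lin_a[of i] by (intro linear_continuous_on) (simp add: linear_conv_bounded_linear)
  have mom_formula: "inner (\<eta> *v x) x = (\<Sum>i\<in>UNIV. a i \<eta> * (inner x (b i))^2)" if "\<eta> \<in> \<aa>" for \<eta> x
    by (rule moment_expand[OF ob eig[OF that]])
  define I where "I = {i. \<exists>x\<in>M. inner x (b i) \<noteq> 0}"
  have "\<exists>x\<in>M. \<forall>i\<in>I. x \<notin> {x. inner x (b i) = 0}"
  proof (rule irred_avoid[OF M_irred])
    fix i assume "i \<in> I"
    have "zariski_closed {x. inner x (b i) = 0}"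
      unfolding zariski_closed_def
      by (rule exI[of _ "{\<lambda>x. inner x (b i)}"]) (auto intro: poly_fun_inner)
    then show "zariski_closed {x. inner x (b i) = 0} \<and> \<not> M \<subseteq> {x. inner x (b i) = 0}"
      using \<open>i \<in> I\<close> by (auto simp: I_def)
  qed simp
  then obtain v where v: "v \<in> M" "\<And>i. i \<in> I \<Longrightarrow> inner v (b i) \<noteq> 0" by blast
  have suppv: "supp b v = I" using v by (auto simp: supp_def I_def)
  have zero: "inner x (b i) = 0" if "x \<in> M" "i \<notin> I" for x i
    using that by (auto simp: I_def)
  have sum_I: "(\<Sum>i\<in>UNIV. g i) = (\<Sum>i\<in>I. g i)" if "\<And>i. i \<notin> I \<Longrightarrow> g i = 0" for g :: "'n \<Rightarrow> real"
    by (rule sum.mono_neutral_right) (auto simp: that)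
  have mom: "moment_map \<aa> x = restrict (\<lambda>\<eta>. \<Sum>i\<in>I. (inner x (b i))^2 * \<alpha> i \<eta>) \<aa>" if "x \<in> M" for x
    unfolding moment_map_def
  proof (rule restrict_ext)
    fix \<eta> assume \<eta>: "\<eta> \<in> \<aa>"
    have "inner (\<eta> *v x) x = (\<Sum>i\<in>UNIV. a i \<eta> * (inner x (b i))^2)" by (rule mom_formula[OF \<eta>])
    also have "\<dots> = (\<Sum>i\<in>I. a i \<eta> * (inner x (b i))^2)"
      by (rule sum_I) (simp add: zero[OF that])
    also have "\<dots> = (\<Sum>i\<in>I. (inner x (b i))^2 * \<alpha> i \<eta>)"
      using a\<alpha>[OF \<eta>] by (simp add: mult.commute)
    finally show "inner (\<eta> *v x) x = (\<Sum>i\<in>I. (inner x (b i))^2 * \<alpha> i \<eta>)" .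
  qed
  show ?thesis
  proof (intro bexI[OF _ v(1)] equalityI subsetI)
    fix y assume "y \<in> moment_map \<aa> ` M"
    then obtain x where x: "x \<in> M" "y = moment_map \<aa> x" by blast
    show "y \<in> cone \<aa> \<alpha> (supp b v)"
      unfolding cone_def suppv x(2) mom[OF x(1)]
      by (intro CollectI exI[of _ "\<lambda>i. (inner x (b i))^2"]) simp
  next
    fix y assume "y \<in> cone \<aa> \<alpha> (supp b v)"
    then obtain s where y: "y = restrict (\<lambda>\<xi>. \<Sum>i\<in>I. s i * \<alpha> i \<xi>) \<aa>" and s: "\<And>i. i \<in> I \<Longrightarrow> s i \<ge> 0"
      unfolding cone_def suppv by blast
    define c where "c i = inner v (b i)" for i
    define C where "C i = (c i)^2 / 2" for i
    have C: "C i > 0" if "i \<in> I" for i using v(2)[OF that] by (simp add: C_def c_def)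
    have "\<forall>i\<in>I. \<exists>m. \<forall>y. C i * exp (2*y) - s i * y \<ge> C i / 2 * exp (2*y) + m"
      using exp_lb2 C s by blast
    then obtain mm where mm: "\<And>i y. i \<in> I \<Longrightarrow> C i * exp (2*y) - s i * y \<ge> C i / 2 * exp (2*y) + mm i"
      by metis
    define f where "f \<xi> = (\<Sum>i\<in>I. C i * exp (2 * a i \<xi>) - s i * a i \<xi>)" for \<xi>
    define D where "D \<xi> \<eta> = (\<Sum>i\<in>I. (2 * C i * exp (2 * a i \<xi>) - s i) * a i \<eta>)" for \<xi> \<eta>
    define m where "m = (\<Sum>i\<in>I. mm i)"
    have term_lb: "C i * exp (2 * a i \<xi>) - s i * a i \<xi> - mm i \<ge> C i / 2 * exp (2 * a i \<xi>)" if "i \<in> I" for i \<xi>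
      using mm[OF that, of "a i \<xi>"] by simp
    have tnn: "0 \<le> C i * exp (2 * a i \<xi>) - s i * a i \<xi> - mm i" if "i \<in> I" for i \<xi>
    proof -
      have "0 \<le> C i / 2 * exp (2 * a i \<xi>)" using C[OF that] by simp
      then show ?thesis using term_lb[OF that, of \<xi>] by linarith
    qed
    have fm: "f \<xi> - m = (\<Sum>i\<in>I. C i * exp (2 * a i \<xi>) - s i * a i \<xi> - mm i)" for \<xi>
      by (simp add: f_def m_def sum_subtractf)
    have flb: "f \<xi> \<ge> m" for \<xi>
    proof -
      have "0 \<le> (\<Sum>i\<in>I. C i * exp (2 * a i \<xi>) - s i * a i \<xi> - mm i)"
        using tnn by (intro sum_nonneg)
      then show ?thesis using fm[of \<xi>] by simp
    qed
    have fbound: "C j / 2 * exp (2 * a j \<xi>) \<le> f \<xi> - m" if "j \<in> I" for j \<xi>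
    proof -
      have "C j * exp (2 * a j \<xi>) - s j * a j \<xi> - mm j \<le> (\<Sum>i\<in>I. C i * exp (2 * a i \<xi>) - s i * a i \<xi> - mm i)"
        using tnn that by (intro member_le_sum) auto
      then show ?thesis using fm[of \<xi>] term_lb[OF that, of \<xi>] by simp
    qed
    have fcont: "continuous_on UNIV f"
      unfolding f_def by (intro continuous_intros a_cont)
    have fderiv: "((\<lambda>t. f (\<xi> + t *\<^sub>R \<eta>)) has_real_derivative D \<xi> \<eta>) (at 0)" for \<xi> \<eta>
    proof -
      have eq: "(\<lambda>t. f (\<xi> + t *\<^sub>R \<eta>)) = (\<lambda>t. \<Sum>i\<in>I. C i * exp (2 * (a i \<xi> + t * a i \<eta>)) - s i * (a i \<xi> + t * a i \<eta>))"
        by (simp add: f_def a_lin)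
      have di: "((\<lambda>t. C i * exp (2 * (a i \<xi> + t * a i \<eta>)) - s i * (a i \<xi> + t * a i \<eta>))
          has_real_derivative (2 * C i * exp (2 * a i \<xi>) - s i) * a i \<eta>) (at 0)" for i
        by (rule derivative_eq_intros refl | simp)+ (simp add: algebra_simps)
      show ?thesis unfolding eq D_def
        by (rule DERIV_sum) (rule di)
    qed
    have Dneg: "D \<xi> (-\<eta>) = - D \<xi> \<eta>" for \<xi> \<eta>
      by (simp add: D_def a_neg sum_negf)
    have "\<forall>k::nat. \<exists>\<xi>\<in>\<aa>. f \<xi> \<le> f 0 \<and> (\<forall>\<eta>\<in>\<aa>. \<bar>D \<xi> \<eta>\<bar> \<le> inverse (real (Suc k)) * norm \<eta>)"
    proof
      fix k :: nat
      show "\<exists>\<xi>\<in>\<aa>. f \<xi> \<le> f 0 \<and> (\<forall>\<eta>\<in>\<aa>. \<bar>D \<xi> \<eta>\<bar> \<le> inverse (real (Suc k)) * norm \<eta>)"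
        by (rule ekeland_step[OF a_subspace fcont flb _ fderiv Dneg]) simp
    qed
    then obtain \<xi>s where \<xi>s: "\<And>k. \<xi>s k \<in> \<aa>" "\<And>k. f (\<xi>s k) \<le> f 0"
      "\<And>k \<eta>. \<eta> \<in> \<aa> \<Longrightarrow> \<bar>D (\<xi>s k) \<eta>\<bar> \<le> inverse (real (Suc k)) * norm \<eta>"
      by metis
    define xs where "xs k = mexp (\<xi>s k) *v v" for k
    have xsM: "xs k \<in> M" for k using M_invariant \<xi>s(1) v(1) by (simp add: xs_def)
    have xs_coord: "inner (xs k) (b j) = exp (a j (\<xi>s k)) * c j" for k j
      unfolding xs_def c_def by (rule mexp_coord[OF ob eig[OF \<xi>s(1)]])
    define K where "K = f 0 - m"
    define \<beta> where "\<beta> j = (1 + 2 * K / (C j / 2)) * \<bar>c j\<bar>" for j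
    have coord_bd: "\<bar>inner (xs k) (b j)\<bar> \<le> \<beta> j" for k j
    proof (cases "j \<in> I")
      case False
      then show ?thesis using zero[OF v(1) False] by (simp add: \<beta>_def c_def xs_coord)
    next
      case True
      have e2: "exp (2 * a j (\<xi>s k)) \<le> 2 * K / (C j / 2)"
      proof -
        have "C j / 2 * exp (2 * a j (\<xi>s k)) \<le> 2 * K"
          using fbound[OF True, of "\<xi>s k"] \<xi>s(2)[of k] flb[of 0] by (simp add: K_def)
        then show ?thesis using C[OF True] by (simp add: field_simps)
      qed
      have "exp (a j (\<xi>s k)) \<le> 1 + exp (2 * a j (\<xi>s k))"
      proof (cases "a j (\<xi>s k) \<le> 0")
        case True then show ?thesis by (smt (verit) exp_gt_zero exp_le_one_iff)
      next
        case False then show ?thesis by (smt (verit) exp_less_cancel_iff exp_gt_zero)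
      qed
      then have "exp (a j (\<xi>s k)) \<le> 1 + 2 * K / (C j / 2)" using e2 by linarith
      then show ?thesis unfolding xs_coord \<beta>_def
        by (simp add: abs_mult mult_right_mono)
    qed
    have "bounded (range xs)"
      unfolding bounded_iff
    proof (intro exI ballI)
      fix x assume "x \<in> range xs"
      then obtain k where k: "x = xs k" by blast
      have "norm x = norm (\<Sum>j\<in>UNIV. inner x (b j) *\<^sub>R b j)" using onb_expand[OF ob, of x] by simp
      also have "\<dots> \<le> (\<Sum>j\<in>UNIV. norm (inner x (b j) *\<^sub>R b j))" by (rule norm_sum)
      also have "\<dots> = (\<Sum>j\<in>UNIV. \<bar>inner x (b j)\<bar>)"
        using ob by (simp add: norm_eq_sqrt_inner)
      also have "\<dots> \<le> (\<Sum>j\<in>UNIV. \<beta> j)" unfolding k by (intro sum_mono coord_bd)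
      finally show "norm x \<le> (\<Sum>j\<in>UNIV. \<beta> j)" .
    qed
    then obtain l r where r: "strict_mono r" and lim: "(xs \<circ> r) \<longlonglongrightarrow> l"
      using bounded_imp_convergent_subsequence by blast
    have lM: "l \<in> M"
      using closed_sequentially[OF zariski_closed_closed[OF M_closed] _ lim] xsM by simp
    show "y \<in> moment_map \<aa> ` M"
    proof (rule image_eqI[OF _ lM])
      show "y = moment_map \<aa> l"
        unfolding y moment_map_def
      proof (rule restrict_ext)
        fix \<eta> assume \<eta>: "\<eta> \<in> \<aa>"
        define P where "P = (\<Sum>i\<in>I. s i * a i \<eta>)"
        define \<Phi> where "\<Phi> x = (\<Sum>i\<in>UNIV. a i \<eta> * (inner x (b i))^2)" for x
        have lim1: "(\<lambda>n. \<Phi> (xs (r n))) \<longlonglongrightarrow> \<Phi> l"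
          unfolding \<Phi>_def using lim unfolding comp_def by (intro tendsto_intros)
        have \<Phi>eq: "\<Phi> (xs k) = D (\<xi>s k) \<eta> + P" for k
        proof -
          have "\<Phi> (xs k) = (\<Sum>i\<in>I. a i \<eta> * (inner (xs k) (b i))^2)"
            unfolding \<Phi>_def by (rule sum_I) (simp add: zero[OF xsM])
          also have "\<dots> = (\<Sum>i\<in>I. (2 * C i * exp (2 * a i (\<xi>s k)) - s i) * a i \<eta> + s i * a i \<eta>)"
          proof (rule sum.cong[OF refl])
            fix i assume "i \<in> I"
            have "(exp (a i (\<xi>s k)))^2 = exp (2 * a i (\<xi>s k))"
              by (metis exp_add mult_2 power2_eq_square)
            then have "(inner (xs k) (b i))^2 = exp (2 * a i (\<xi>s k)) * (c i)^2"
              by (simp only: xs_coord power_mult_distrib)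
            then show "a i \<eta> * (inner (xs k) (b i))^2 = (2 * C i * exp (2 * a i (\<xi>s k)) - s i) * a i \<eta> + s i * a i \<eta>"
              by (simp add: C_def algebra_simps)
          qed
          also have "\<dots> = D (\<xi>s k) \<eta> + P" by (simp add: D_def P_def sum.distrib)
          finally show ?thesis .
        qed
        have Dlim: "(\<lambda>k. D (\<xi>s k) \<eta>) \<longlonglongrightarrow> 0"
        proof (rule tendsto_sandwich[of "\<lambda>k. - (inverse (real (Suc k)) * norm \<eta>)" _ _ "\<lambda>k. inverse (real (Suc k)) * norm \<eta>"])
          show "\<forall>\<^sub>F k in sequentially. - (inverse (real (Suc k)) * norm \<eta>) \<le> D (\<xi>s k) \<eta>"
          proof (intro always_eventually allI)
            fix k show "- (inverse (real (Suc k)) * norm \<eta>) \<le> D (\<xi>s k) \<eta>"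
              using abs_le_D2[OF \<xi>s(3)[OF \<eta>, of k]] by linarith
          qed
          show "\<forall>\<^sub>F k in sequentially. D (\<xi>s k) \<eta> \<le> inverse (real (Suc k)) * norm \<eta>"
          proof (intro always_eventually allI)
            fix k show "D (\<xi>s k) \<eta> \<le> inverse (real (Suc k)) * norm \<eta>"
              using abs_le_D1[OF \<xi>s(3)[OF \<eta>, of k]] by linarith
          qed
          show "(\<lambda>k. inverse (real (Suc k)) * norm \<eta>) \<longlonglongrightarrow> 0"
            by (rule tendsto_mult_left_zero[OF LIMSEQ_inverse_real_of_nat])
          then show "(\<lambda>k. - (inverse (real (Suc k)) * norm \<eta>)) \<longlonglongrightarrow> 0"
            using tendsto_minus by fastforce
        qed
        have "(\<lambda>k. \<Phi> (xs k)) \<longlonglongrightarrow> 0 + P"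
          unfolding \<Phi>eq by (intro tendsto_intros Dlim)
        then have "(\<lambda>n. \<Phi> (xs (r n))) \<longlonglongrightarrow> P"
          using LIMSEQ_subseq_LIMSEQ[OF _ r] unfolding comp_def by fastforce
        then have "\<Phi> l = P" using lim1 LIMSEQ_unique by blast
        then show "(\<Sum>i\<in>I. s i * \<alpha> i \<eta>) = inner (\<eta> *v l) l"
          using mom_formula[OF \<eta>, of l] a\<alpha>[OF \<eta>] by (simp add: \<Phi>_def P_def)
      qed
    qed
  qed
qed

end
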